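(* Let $(M,\circ,\mathrm{OR})$ be a free $\mathbb{D}$-module of rank 3 with scalar product and orientation, and let $z_1,z_2,z_3\in M\setminus\epsilon M$ be pairwise $\mathbb{D}$-linearly independent (equivalently, no two of their axes are parallel). Then the following are equivalent: (i) $z_1\times z_2\circ z_3=0$; (ii) some $z_i$ is a $\mathbb{D}$-linear combination of the other two; (iii) the three axes intersect orthogonally a common line of $E$. If these hold, then every $z_i$ is a $\mathbb{D}$-linear combination of the other two.
   Context: $\mathbb{D}=\{a+\epsilon b: a,b\in\mathbb{R}\}$, $\epsilon^2=0$. Scalar product: symmetric $\mathbb{D}$-bilinear $\circ:M\times M\to\mathbb{D}$ with $\mathfrak{Re}(x\circ x)\ge0$, equality iff $x\in\epsilon M$; orientation: one of the two classes of ordered bases under $\{b'_j=A_{jk}b_k\}\sim\{b_k\}$ iff $\det\mathfrak{Re}(A)>0$. Cross product $x\times y=x^iy^j\epsilon_{ijk}m_k$ in any positive orthonormal basis $\{m_i\}$; $z_1\times z_2\circ z_3:=(z_1\times z_2)\circ z_3$. $V=M/\epsilon M$, $\pi$ the quotient map. $E$ is the set of real 3-dimensional subspaces $P\subset M$ with $\mathfrak{Du}(x\circ y)=0$ for $x,y\in P$ and $P\cap\epsilon M=\{0\}$, a Euclidean affine space over $V$ (with $B-A:=d^ke_k$ where $e^B_i=e^A_i+\epsilon\,\epsilon_{ijk}d^ke^A_j$, $\{e_i\}$ positive orthonormal in $V$, $e^P_i\in P$ its lift). Each $z\in M\setminus\epsilon M$ is uniquely $z=(a+\epsilon b)u$ with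 $a>0$, $b\in\mathbb{R}$, $u\circ u=1$; its axis is the line $\{P\in E: u\in P\}$, with direction $\pi(u)$. *)

theory Defs
  imports Complex_Main
begin

datatype dual = Dual (re: real) (du: real)

instantiation dual :: comm_ring_1
begin
definition "zero_dual = Dual 0 0"
definition "one_dual = Dual 1 0"
definition "plus_dual x y = Dual (re x + re y) (du x + du y)"
definition "minus_dual x y = Dual (re x - re y) (du x - du y)"
definition "uminus_dual x = Dual (- re x) (- du x)"
definition "times_dual x y = Dual (re x * re y) (re x * du y + du x * re y)"
instance
  by standard (auto simp: zero_dual_def one_dual_def plus_dual_def minus_dual_def
      uminus_dual_def times_dual_def algebra_simps dual.expand)
end

definition eps :: dual where "eps = Dual 0 1"

definition dreal :: "real \<Rightarrow> dual" where "dreal r = Dual r 0"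

definition epsM :: "(dual \<Rightarrow> 'm::ab_group_add \<Rightarrow> 'm) \<Rightarrow> 'm set" where
  "epsM smul = range (smul eps)"

definition is_dbasis :: "(dual \<Rightarrow> 'm::ab_group_add \<Rightarrow> 'm) \<Rightarrow> (nat \<Rightarrow> 'm) \<Rightarrow> bool" where
  "is_dbasis smul b \<longleftrightarrow>
     (\<forall>x. \<exists>c. x = (\<Sum>i<3. smul (c i) (b i))) \<and>
     (\<forall>c. (\<Sum>i<3. smul (c i) (b i)) = 0 \<longrightarrow> (\<forall>i<3. c i = 0))"

definition free_rank3 :: "(dual \<Rightarrow> 'm::ab_group_add \<Rightarrow> 'm) \<Rightarrow> bool" where
  "free_rank3 smul \<longleftrightarrow> (\<exists>b. is_dbasis smul b)"

definition scalar_product ::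
  "(dual \<Rightarrow> 'm::ab_group_add \<Rightarrow> 'm) \<Rightarrow> ('m \<Rightarrow> 'm \<Rightarrow> dual) \<Rightarrow> bool" where
  "scalar_product smul sp \<longleftrightarrow>
     (\<forall>x y. sp x y = sp y x) \<and>
     (\<forall>x y z. sp (x + y) z = sp x z + sp y z) \<and>
     (\<forall>a x y. sp (smul a x) y = a * sp x y) \<and>
     (\<forall>x. re (sp x x) \<ge> 0) \<and>
     (\<forall>x. re (sp x x) = 0 \<longleftrightarrow> x \<in> epsM smul)"

definition det3 :: "(nat \<Rightarrow> nat \<Rightarrow> real) \<Rightarrow> real" where
  "det3 A = A 0 0 * (A 1 1 * A 2 2 - A 1 2 * A 2 1)
          - A 0 1 * (A 1 0 * A 2 2 - A 1 2 * A 2 0)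
          + A 0 2 * (A 1 0 * A 2 1 - A 1 1 * A 2 0)"

definition same_orient ::
  "(dual \<Rightarrow> 'm::ab_group_add \<Rightarrow> 'm) \<Rightarrow> (nat \<Rightarrow> 'm) \<Rightarrow> (nat \<Rightarrow> 'm) \<Rightarrow> bool" where
  "same_orient smul b' b \<longleftrightarrow>
     (\<exists>A. (\<forall>j<3. b' j = (\<Sum>k<3. smul (A j k) (b k))) \<and> det3 (\<lambda>j k. re (A j k)) > 0)"

definition orientation ::
  "(dual \<Rightarrow> 'm::ab_group_add \<Rightarrow> 'm) \<Rightarrow> (nat \<Rightarrow> 'm) set \<Rightarrow> bool" where
  "orientation smul OR \<longleftrightarrow>
     (\<exists>b0. is_dbasis smul b0 \<and> OR = {b. is_dbasis smul b \<and> same_orient smul b b0})"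

definition orthonormal :: "('m \<Rightarrow> 'm \<Rightarrow> dual) \<Rightarrow> (nat \<Rightarrow> 'm) \<Rightarrow> bool" where
  "orthonormal sp m \<longleftrightarrow> (\<forall>i<3. \<forall>j<3. sp (m i) (m j) = (if i = j then 1 else 0))"

definition pos_orthonormal ::
  "(dual \<Rightarrow> 'm::ab_group_add \<Rightarrow> 'm) \<Rightarrow> ('m \<Rightarrow> 'm \<Rightarrow> dual) \<Rightarrow> (nat \<Rightarrow> 'm) set
     \<Rightarrow> (nat \<Rightarrow> 'm) \<Rightarrow> bool" where
  "pos_orthonormal smul sp OR m \<longleftrightarrow> is_dbasis smul m \<and> orthonormal sp m \<and> m \<in> OR"

text \<open>A fixed positive orthonormal basis (the constructions below do not depend on the choice).\<close>
definition pob ::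
  "(dual \<Rightarrow> 'm::ab_group_add \<Rightarrow> 'm) \<Rightarrow> ('m \<Rightarrow> 'm \<Rightarrow> dual) \<Rightarrow> (nat \<Rightarrow> 'm) set \<Rightarrow> nat \<Rightarrow> 'm" where
  "pob smul sp OR = (SOME m. pos_orthonormal smul sp OR m)"

definition levi :: "nat \<Rightarrow> nat \<Rightarrow> nat \<Rightarrow> real" where
  "levi i j k =
     (if (i, j, k) \<in> {(0, 1, 2), (1, 2, 0), (2, 0, 1)} then 1
      else if (i, j, k) \<in> {(0, 2, 1), (2, 1, 0), (1, 0, 2)} then -1 else 0)"

definition cross ::
  "(dual \<Rightarrow> 'm::ab_group_add \<Rightarrow> 'm) \<Rightarrow> ('m \<Rightarrow> 'm \<Rightarrow> dual) \<Rightarrow> (nat \<Rightarrow> 'm) set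
     \<Rightarrow> 'm \<Rightarrow> 'm \<Rightarrow> 'm" where
  "cross smul sp OR x y =
     (let m = pob smul sp OR in
      (\<Sum>k<3. smul (\<Sum>i<3. \<Sum>j<3. sp x (m i) * sp y (m j) * dreal (levi i j k)) (m k)))"

definition real_subspace :: "(dual \<Rightarrow> 'm::ab_group_add \<Rightarrow> 'm) \<Rightarrow> 'm set \<Rightarrow> bool" where
  "real_subspace smul P \<longleftrightarrow>
     0 \<in> P \<and> (\<forall>x\<in>P. \<forall>y\<in>P. x + y \<in> P) \<and> (\<forall>r. \<forall>x\<in>P. smul (dreal r) x \<in> P)"

definition real_dim3 :: "(dual \<Rightarrow> 'm::ab_group_add \<Rightarrow> 'm) \<Rightarrow> 'm set \<Rightarrow> bool" where
  "real_dim3 smul P \<longleftrightarrow>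
     (\<exists>v :: nat \<Rightarrow> 'm. (\<forall>i<3. v i \<in> P) \<and>
          (\<forall>x\<in>P. \<exists>c :: nat \<Rightarrow> real. x = (\<Sum>i<3. smul (dreal (c i)) (v i))) \<and>
          (\<forall>c :: nat \<Rightarrow> real. (\<Sum>i<3. smul (dreal (c i)) (v i)) = 0 \<longrightarrow> (\<forall>i<3. c i = 0)))"

definition Espace ::
  "(dual \<Rightarrow> 'm::ab_group_add \<Rightarrow> 'm) \<Rightarrow> ('m \<Rightarrow> 'm \<Rightarrow> dual) \<Rightarrow> 'm set set" where
  "Espace smul sp =
     {P. real_subspace smul P \<and> real_dim3 smul P \<and>
         (\<forall>x\<in>P. \<forall>y\<in>P. du (sp x y) = 0) \<and> P \<inter> epsM smul = {0}}"

text \<open>The lift to P of the class pi(x) in V = M / eps M.\<close>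
definition lift :: "(dual \<Rightarrow> 'm::ab_group_add \<Rightarrow> 'm) \<Rightarrow> 'm set \<Rightarrow> 'm \<Rightarrow> 'm" where
  "lift smul P x = (THE y. y \<in> P \<and> y - x \<in> epsM smul)"

text \<open>diffE B A v: "B - A = pi(v)" in V, where B - A = d^k e_k with
  e^B_i = e^A_i + eps eps_ijk d^k e^A_j, e_i = pi(m_i) for the positive orthonormal basis m.\<close>
definition diffE ::
  "(dual \<Rightarrow> 'm::ab_group_add \<Rightarrow> 'm) \<Rightarrow> ('m \<Rightarrow> 'm \<Rightarrow> dual) \<Rightarrow> (nat \<Rightarrow> 'm) set
     \<Rightarrow> 'm set \<Rightarrow> 'm set \<Rightarrow> 'm \<Rightarrow> bool" where
  "diffE smul sp OR B A v \<longleftrightarrow>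
     (let m = pob smul sp OR in
      \<exists>d :: nat \<Rightarrow> real.
        v - (\<Sum>k<3. smul (dreal (d k)) (m k)) \<in> epsM smul \<and>
        (\<forall>i<3. lift smul B (m i) =
                 lift smul A (m i) +
                 smul eps (\<Sum>j<3. \<Sum>k<3. smul (dreal (levi i j k * d k)) (lift smul A (m j)))))"

definition lineE ::
  "(dual \<Rightarrow> 'm::ab_group_add \<Rightarrow> 'm) \<Rightarrow> ('m \<Rightarrow> 'm \<Rightarrow> dual) \<Rightarrow> (nat \<Rightarrow> 'm) set
     \<Rightarrow> 'm set \<Rightarrow> 'm \<Rightarrow> 'm set set" where
  "lineE smul sp OR A w =
     {B \<in> Espace smul sp. \<exists>t::real. diffE smul sp OR B A (smul (dreal t) w)}"

definition unit_part ::
  "(dual \<Rightarrow> 'm::ab_group_add \<Rightarrow> 'm) \<Rightarrow> ('m \<Rightarrow> 'm \<Rightarrow> dual) \<Rightarrow> 'm \<Rightarrow> 'm" where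
  "unit_part smul sp z =
     (THE u. sp u u = 1 \<and> (\<exists>a b. a > 0 \<and> z = smul (Dual a b) u))"

definition axis ::
  "(dual \<Rightarrow> 'm::ab_group_add \<Rightarrow> 'm) \<Rightarrow> ('m \<Rightarrow> 'm \<Rightarrow> dual) \<Rightarrow> 'm \<Rightarrow> 'm set set" where
  "axis smul sp z = {P \<in> Espace smul sp. unit_part smul sp z \<in> P}"

text \<open>Euclidean inner product on V = M / eps M: Re(x \<circ> y) on representatives.\<close>
definition orthV :: "('m \<Rightarrow> 'm \<Rightarrow> dual) \<Rightarrow> 'm \<Rightarrow> 'm \<Rightarrow> bool" where
  "orthV sp v w \<longleftrightarrow> re (sp v w) = 0"

definition dindep2 :: "(dual \<Rightarrow> 'm::ab_group_add \<Rightarrow> 'm) \<Rightarrow> 'm \<Rightarrow> 'm \<Rightarrow> bool" where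
  "dindep2 smul x y \<longleftrightarrow> (\<forall>a b. smul a x + smul b y = 0 \<longrightarrow> a = 0 \<and> b = 0)"

definition dcomb :: "(dual \<Rightarrow> 'm::ab_group_add \<Rightarrow> 'm) \<Rightarrow> 'm \<Rightarrow> 'm \<Rightarrow> 'm \<Rightarrow> bool" where
  "dcomb smul x y z \<longleftrightarrow> (\<exists>a b. x = smul a y + smul b z)"

definition axes_meet_common_perp ::
  "(dual \<Rightarrow> 'm::ab_group_add \<Rightarrow> 'm) \<Rightarrow> ('m \<Rightarrow> 'm \<Rightarrow> dual) \<Rightarrow> (nat \<Rightarrow> 'm) set
     \<Rightarrow> 'm \<Rightarrow> 'm \<Rightarrow> 'm \<Rightarrow> bool" where
  "axes_meet_common_perp smul sp OR z1 z2 z3 \<longleftrightarrow>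
     (\<exists>A \<in> Espace smul sp. \<exists>w. w \<notin> epsM smul \<and>
        (\<forall>z \<in> {z1, z2, z3}.
           axis smul sp z \<inter> lineE smul sp OR A w \<noteq> {} \<and>
           orthV sp (unit_part smul sp z) w))"

end

theory Submission
  imports Defs "HOL-Analysis.Determinants"
begin

lemma dual_eq_iff: "x = y \<longleftrightarrow> re x = re y \<and> du x = du y"
  by (cases x; cases y) auto

lemma dual_ops[simp]:
  "re (x + y) = re x + re y" "du (x + y) = du x + du y"
  "re (x - y) = re x - re y" "du (x - y) = du x - du y"
  "re (- x) = - re x" "du (- x) = - du x"
  "re (x * y) = re x * re y" "du (x * y) = re x * du y + du x * re y"
  "re 0 = 0" "du 0 = 0" "re 1 = 1" "du 1 = 0"
  "re eps = 0" "du eps = 1" "re (dreal r) = r" "du (dreal r) = 0"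
  by (simp_all add: plus_dual_def minus_dual_def uminus_dual_def times_dual_def
      zero_dual_def one_dual_def eps_def dreal_def)

lemma re_sum[simp]: "re (sum f A) = (\<Sum>a\<in>A. re (f a))"
  by (induction A rule: infinite_finite_induct) auto
lemma du_sum[simp]: "du (sum f A) = (\<Sum>a\<in>A. du (f a))"
  by (induction A rule: infinite_finite_induct) auto

lemma sum3: "(\<Sum>i<3. f i) = f 0 + f 1 + f (2::nat)"
  by (simp add: numeral_3_eq_3 numeral_2_eq_2 add.commute add.left_commute)

lemma all3: "(\<forall>i<3. P i) \<longleftrightarrow> P 0 \<and> P 1 \<and> P (2::nat)"
  by (auto simp: numeral_3_eq_3 numeral_2_eq_2 less_Suc_eq)

definition dinv :: "dual \<Rightarrow> dual" where
  "dinv x = Dual (1 / re x) (- du x / (re x)^2)"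

lemma dinv_mult: "re x \<noteq> 0 \<Longrightarrow> x * dinv x = 1"
  by (simp add: dual_eq_iff dinv_def power2_eq_square field_simps)

lemma dinv_re[simp]: "re (dinv x) = 1 / re x"
  by (simp add: dinv_def)

definition dsqrt :: "dual \<Rightarrow> dual" where
  "dsqrt s = Dual (sqrt (re s)) (du s / (2 * sqrt (re s)))"

lemma dsqrt_sq: "re s > 0 \<Longrightarrow> dsqrt s * dsqrt s = s"
  by (simp add: dual_eq_iff dsqrt_def field_simps)

lemma dsqrt_re: "re (dsqrt s) = sqrt (re s)"
  by (simp add: dsqrt_def)

lemma eps_mult_re: "eps * x = eps * dreal (re x)"
  by (simp add: dual_eq_iff)

lemma eps_ne0: "eps \<noteq> 0"
  by (simp add: dual_eq_iff)

locale dset = module smul for smul :: "dual \<Rightarrow> 'm::ab_group_add \<Rightarrow> 'm" +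
  fixes sp :: "'m \<Rightarrow> 'm \<Rightarrow> dual" and OR :: "(nat \<Rightarrow> 'm) set"
  assumes spp: "Defs.scalar_product smul sp" and ori: "orientation smul OR"
begin

lemma sp_sym: "sp x y = sp y x"
  using spp unfolding Defs.scalar_product_def by blast
lemma sp_addL: "sp (x + y) z = sp x z + sp y z"
  using spp unfolding Defs.scalar_product_def by blast
lemma sp_addR: "sp z (x + y) = sp z x + sp z y"
  by (simp add: sp_sym[of z] sp_addL)
lemma sp_smulL: "sp (smul a x) y = a * sp x y"
  using spp unfolding Defs.scalar_product_def by blast
lemma sp_smulR: "sp y (smul a x) = a * sp y x"
  by (simp add: sp_sym[of y] sp_smulL)
lemma sp_zeroL[simp]: "sp 0 y = 0"
  using sp_smulL[of 0 0 y] by simp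
lemma sp_zeroR[simp]: "sp y 0 = 0"
  by (simp add: sp_sym[of y])
lemma sp_minusL: "sp (- x) y = - sp x y"
  using sp_smulL[of "-1" x y] by simp
lemma sp_minusR: "sp y (- x) = - sp y x"
  by (simp add: sp_sym[of y] sp_minusL)
lemma sp_diffL: "sp (x - z) y = sp x y - sp z y"
  using sp_addL[of x "-z" y] by (simp add: sp_minusL)
lemma sp_diffR: "sp y (x - z) = sp y x - sp y z"
  using sp_addR[of y x "-z"] by (simp add: sp_minusR)
lemma sp_sumL: "sp (sum f A) y = (\<Sum>a\<in>A. sp (f a) y)"
  by (induction A rule: infinite_finite_induct) (auto simp: sp_addL)
lemma sp_sumR: "sp y (sum f A) = (\<Sum>a\<in>A. sp y (f a))"
  by (induction A rule: infinite_finite_induct) (auto simp: sp_addR)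
lemmas sp_lin = sp_addL sp_addR sp_smulL sp_smulR sp_minusL sp_minusR sp_diffL sp_diffR
  sp_sumL sp_sumR
lemma sp_re_nonneg: "re (sp x x) \<ge> 0"
  using spp unfolding Defs.scalar_product_def by blast
lemma sp_re_zero: "re (sp x x) = 0 \<longleftrightarrow> x \<in> epsM smul"
  using spp unfolding Defs.scalar_product_def by blast
lemma sp_re_pos: "x \<notin> epsM smul \<Longrightarrow> re (sp x x) > 0"
  using sp_re_nonneg[of x] sp_re_zero[of x] by linarith

lemma epsM_iff: "x \<in> epsM smul \<longleftrightarrow> (\<exists>y. x = smul eps y)"
  by (auto simp: epsM_def)

lemma eps_eps: "eps * eps = 0"
  by (simp add: dual_eq_iff)

lemma sp_nondeg: assumes "\<And>y. sp x y = 0" shows "x = 0"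
proof -
  have "re (sp x x) = 0" using assms by simp
  then obtain y where y: "x = smul eps y" using sp_re_zero epsM_iff by blast
  show ?thesis
  proof (cases "y \<in> epsM smul")
    case True
    then obtain y' where "y = smul eps y'" using epsM_iff by blast
    then show ?thesis using y by (simp add: eps_eps)
  next
    case False
    then have "re (sp y y) > 0" by (rule sp_re_pos)
    moreover have "sp x y = eps * sp y y" using y by (simp add: sp_smulL)
    ultimately show ?thesis using assms[of y] by (simp add: dual_eq_iff)
  qed
qed

definition comb :: "(nat \<Rightarrow> 'm) \<Rightarrow> (nat \<Rightarrow> dual) \<Rightarrow> 'm" where
  "comb b c = (\<Sum>i<3. smul (c i) (b i))"

lemma comb_add: "comb b c + comb b d = comb b (\<lambda>i. c i + d i)"
  by (simp add: comb_def sum.distrib scale_left_distrib)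
lemma comb_diff: "comb b c - comb b d = comb b (\<lambda>i. c i - d i)"
  by (simp add: comb_def sum_subtractf scale_left_diff_distrib)
lemma comb_smul: "smul a (comb b c) = comb b (\<lambda>i. a * c i)"
  by (simp add: comb_def scale_sum_right)
lemma less3: "i < 3 \<Longrightarrow> i = 0 \<or> i = 1 \<or> i = (2::nat)"
  by auto

lemma comb_delta: "i < 3 \<Longrightarrow> b i = comb b (\<lambda>j. if j = i then 1 else 0)"
  by (drule less3) (auto simp: comb_def sum3)

lemma basis_zero: "is_dbasis smul b \<Longrightarrow> comb b c = 0 \<Longrightarrow> i < 3 \<Longrightarrow> c i = 0"
  by (simp add: is_dbasis_def comb_def)

lemma basis_unique: "is_dbasis smul b \<Longrightarrow> comb b c = comb b d \<Longrightarrow> i < 3 \<Longrightarrow> c i = d i"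
  using basis_zero[of b "\<lambda>i. c i - d i" i] comb_diff[of b c d] by simp

lemma basis_span: "is_dbasis smul b \<Longrightarrow> \<exists>c. x = comb b c"
  by (simp add: is_dbasis_def comb_def)

lemma basis_eps: assumes b: "is_dbasis smul b" and e: "comb b c \<in> epsM smul" and i: "i < 3"
  shows "re (c i) = 0"
proof -
  obtain y where y: "comb b c = smul eps y" using e epsM_iff by blast
  obtain d where d: "y = comb b d" using basis_span[OF b] by blast
  have "comb b c = comb b (\<lambda>i. eps * d i)" using y d comb_smul by simp
  then have "c i = eps * d i" using basis_unique[OF b] i by blast
  then show ?thesis by simp
qed

lemma basis_not_eps: "is_dbasis smul b \<Longrightarrow> i < 3 \<Longrightarrow> re (c i) \<noteq> 0 \<Longrightarrow> comb b c \<notin> epsM smul"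
  using basis_eps by blast

end

context dset
begin

definition nr :: "'m \<Rightarrow> dual" where "nr x = dinv (dsqrt (sp x x))"

lemma nr_facts: assumes "x \<notin> epsM smul"
  shows "re (nr x) > 0" "sp (smul (nr x) x) (smul (nr x) x) = 1"
    "smul (dsqrt (sp x x)) (smul (nr x) x) = x"
proof -
  have s: "re (sp x x) > 0" using sp_re_pos[OF assms] .
  let ?d = "dsqrt (sp x x)"
  have d: "re ?d > 0" using s by (simp add: dsqrt_re)
  have dd: "?d * ?d = sp x x" using dsqrt_sq[OF s] .
  have di: "?d * dinv ?d = 1" using dinv_mult d by simp
  show "re (nr x) > 0" using d by (simp add: nr_def)
  have "sp (smul (nr x) x) (smul (nr x) x) = nr x * (nr x * sp x x)"
    by (simp add: sp_smulL sp_smulR)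
  also have "\<dots> = (?d * dinv ?d) * (?d * dinv ?d)"
  proof -
    have e: "dinv ?d * (dinv ?d * (?d * ?d)) = (?d * dinv ?d) * (?d * dinv ?d)"
      by (simp add: algebra_simps)
    then show ?thesis by (simp only: dd nr_def)
  qed
  finally show "sp (smul (nr x) x) (smul (nr x) x) = 1" using di by simp
  show "smul ?d (smul (nr x) x) = x" using di by (simp add: nr_def)
qed

lemma exists_pos_orth: "\<exists>m. pos_orthonormal smul sp OR m"
proof -
  obtain b where b: "is_dbasis smul b" and OR: "OR = {b'. is_dbasis smul b' \<and> same_orient smul b' b}"
    using ori unfolding orientation_def by blast
  define d :: "nat \<Rightarrow> nat \<Rightarrow> dual" where "d = (\<lambda>i j. if j = i then 1 else 0)"
  have bd: "b i = comb b (d i)" if "i < 3" for i using comb_delta[OF that] by (simp add: d_def)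
  have d_re: "re (d i i) \<noteq> 0" for i by (simp add: d_def)
  have b0: "b 0 \<notin> epsM smul" using basis_not_eps[OF b, of 0 "d 0"] bd[of 0] d_re by simp
  define A0 where "A0 = (\<lambda>i. nr (b 0) * d 0 i)"
  define g0 where "g0 = smul (nr (b 0)) (b 0)"
  have g0c: "g0 = comb b A0" unfolding g0_def A0_def using bd[of 0] comb_smul by simp
  define C1 where "C1 = (\<lambda>i. d 1 i - sp (b 1) g0 * A0 i)"
  define y1 where "y1 = b 1 - smul (sp (b 1) g0) g0"
  have y1c: "y1 = comb b C1" unfolding y1_def C1_def g0c using bd[of 1]
    by (simp add: comb_smul comb_diff)
  have y1e: "y1 \<notin> epsM smul" using basis_not_eps[OF b, of 1 C1] y1c
    by (simp add: C1_def A0_def d_def)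
  define A1 where "A1 = (\<lambda>i. nr y1 * C1 i)"
  define g1 where "g1 = smul (nr y1) y1"
  have g1c: "g1 = comb b A1" unfolding g1_def A1_def y1c by (simp add: comb_smul)
  define C2 where "C2 = (\<lambda>i. d 2 i - sp (b 2) g0 * A0 i - sp (b 2) g1 * A1 i)"
  define y2 where "y2 = b 2 - smul (sp (b 2) g0) g0 - smul (sp (b 2) g1) g1"
  have y2c: "y2 = comb b C2" unfolding y2_def C2_def g0c g1c using bd[of 2]
    by (simp add: comb_smul comb_diff)
  have y2e: "y2 \<notin> epsM smul" using basis_not_eps[OF b, of 2 C2] y2c
    by (simp add: C2_def A0_def A1_def C1_def d_def)
  define g2 where "g2 = smul (nr y2) y2"
  define A2 where "A2 = (\<lambda>i. nr y2 * C2 i)"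
  have g2c: "g2 = comb b A2" unfolding g2_def A2_def y2c by (simp add: comb_smul)
  define g where "g = (\<lambda>i::nat. if i = 0 then g0 else if i = 1 then g1 else g2)"
  define A where "A = (\<lambda>i::nat. if i = 0 then A0 else if i = 1 then A1 else A2)"
  have n00: "sp g0 g0 = 1" using nr_facts(2)[OF b0] by (simp add: g0_def)
  have n11: "sp g1 g1 = 1" using nr_facts(2)[OF y1e] by (simp add: g1_def)
  have n22: "sp g2 g2 = 1" using nr_facts(2)[OF y2e] by (simp add: g2_def)
  have n01: "sp g0 g1 = 0"
    unfolding g1_def y1_def by (simp add: sp_lin n00 sp_sym)
  have n01': "sp g1 g0 = 0" using n01 sp_sym[of g1 g0] by simp
  have n02: "sp g0 g2 = 0"
    unfolding g2_def y2_def by (simp add: sp_lin n00 n01 n01' sp_sym)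
  have n02': "sp g2 g0 = 0" using n02 sp_sym[of g2 g0] by simp
  have n12: "sp g1 g2 = 0"
    unfolding g2_def y2_def by (simp add: sp_lin n11 n01 n01' sp_sym)
  have n12': "sp g2 g1 = 0" using n12 sp_sym[of g2 g1] by simp
  have orth: "orthonormal sp g"
    unfolding orthonormal_def all3 g_def using n00 n11 n22 n01 n02 n12 n01' n02' n12'
    by simp
  have eb0: "b 0 = smul (dsqrt (sp (b 0) (b 0))) g0" using nr_facts(3)[OF b0] by (simp add: g0_def)
  have eb1: "b 1 = smul (dsqrt (sp y1 y1)) g1 + smul (sp (b 1) g0) g0"
    using nr_facts(3)[OF y1e] by (simp add: g1_def y1_def)
  have eb2: "b 2 = smul (dsqrt (sp y2 y2)) g2 + smul (sp (b 2) g0) g0 + smul (sp (b 2) g1) g1"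
    using nr_facts(3)[OF y2e] by (simp add: g2_def y2_def)
  have span: "x = comb g (\<lambda>i. sp x (g i))" for x
  proof -
    define x' where "x' = x - comb g (\<lambda>i. sp x (g i))"
    have c0: "sp x' g0 = 0" "sp x' g1 = 0" "sp x' g2 = 0"
      unfolding x'_def comb_def sum3 g_def
      by (simp_all add: sp_lin n00 n11 n22 n01 n02 n12 n01' n02' n12')
    have cb0: "sp x' (b 0) = 0" by (subst eb0) (simp add: sp_lin c0)
    have cb1: "sp x' (b 1) = 0" by (subst eb1) (simp add: sp_lin c0)
    have cb2: "sp x' (b 2) = 0" by (subst eb2) (simp add: sp_lin c0)
    have cb: "sp x' (b i) = 0" if "i < 3" for i
      using less3[OF that] cb0 cb1 cb2 by auto
    have "sp x' y = 0" for y
    proof -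
      obtain c where "y = comb b c" using basis_span[OF b] by blast
      then show ?thesis using cb by (simp add: comb_def sp_lin sum3)
    qed
    then have "x' = 0" by (rule sp_nondeg)
    then show ?thesis by (simp add: x'_def)
  qed
  have indep: "c i = 0" if "comb g c = 0" "i < 3" for c i
  proof -
    have "sp (comb g c) (g i) = c i"
      using less3[OF \<open>i < 3\<close>] orth unfolding orthonormal_def all3
      by (auto simp: comb_def sum3 sp_lin g_def)
    then show ?thesis using that by simp
  qed
  have isb: "is_dbasis smul g"
    unfolding is_dbasis_def using span indep unfolding comb_def by metis
  have gA: "g j = comb b (A j)" for j
    by (simp add: g_def A_def g0c g1c g2c)
  have z: "A 0 1 = 0" "A 0 2 = 0" "A 1 2 = 0"
    by (simp_all add: A_def A0_def A1_def C1_def d_def)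
  have "re (A 0 0) > 0" using nr_facts(1)[OF b0] by (simp add: A_def A0_def d_def)
  moreover have "re (A 1 1) > 0" using nr_facts(1)[OF y1e] by (simp add: A_def A1_def C1_def A0_def d_def)
  moreover have "re (A 2 2) > 0" using nr_facts(1)[OF y2e]
    by (simp add: A_def A2_def C2_def A1_def C1_def A0_def d_def)
  ultimately have "det3 (\<lambda>j k. re (A j k)) > 0"
    unfolding det3_def using z by simp
  then have "same_orient smul g b"
    unfolding same_orient_def using gA unfolding comb_def by blast
  then have "g \<in> OR" using OR isb by blast
  then show ?thesis unfolding pos_orthonormal_def using isb orth by blast
qed

definition mm :: "nat \<Rightarrow> 'm" where "mm = pob smul sp OR"

lemma mm_pos: "pos_orthonormal smul sp OR mm"
  unfolding mm_def pob_def using exists_pos_orth by (rule someI_ex)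

lemma mm_basis: "is_dbasis smul mm" and mm_orth: "orthonormal sp mm"
  using mm_pos by (auto simp: pos_orthonormal_def)

end

definition ddot :: "(nat \<Rightarrow> dual) \<Rightarrow> (nat \<Rightarrow> dual) \<Rightarrow> dual" where
  "ddot a b = a 0 * b 0 + a 1 * b 1 + a 2 * b 2"

definition dcrs :: "(nat \<Rightarrow> dual) \<Rightarrow> (nat \<Rightarrow> dual) \<Rightarrow> nat \<Rightarrow> dual" where
  "dcrs a b k = (if k = 0 then a 1 * b 2 - a 2 * b 1 else if k = 1 then a 2 * b 0 - a 0 * b 2
     else a 0 * b 1 - a 1 * b 0)"

context dset
begin

definition co :: "'m \<Rightarrow> nat \<Rightarrow> dual" where "co x i = sp x (mm i)"

lemma mm_sp: "i < 3 \<Longrightarrow> j < 3 \<Longrightarrow> sp (mm i) (mm j) = (if i = j then 1 else 0)"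
  using mm_orth by (simp add: orthonormal_def)

lemma co_comb: "j < 3 \<Longrightarrow> co (comb mm c) j = c j"
  using less3[of j] by (auto simp: co_def comb_def sum3 sp_lin mm_sp)

lemma expand: "x = comb mm (co x)"
proof -
  obtain c where c: "x = comb mm c" using basis_span[OF mm_basis] by blast
  have "co x j = c j" if "j < 3" for j using c co_comb[OF that] by simp
  then have "comb mm (co x) = comb mm c" by (simp add: comb_def)
  then show ?thesis using c by simp
qed

lemma co_add[simp]: "co (x + y) i = co x i + co y i"
  by (simp add: co_def sp_lin)
lemma co_diff[simp]: "co (x - y) i = co x i - co y i"
  by (simp add: co_def sp_lin)
lemma co_minus[simp]: "co (- x) i = - co x i"
  by (simp add: co_def sp_lin)
lemma co_smul[simp]: "co (smul a x) i = a * co x i"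
  by (simp add: co_def sp_lin)
lemma co_zero[simp]: "co 0 i = 0"
  by (simp add: co_def)

lemma sp_coord: "sp x y = ddot (co x) (co y)"
proof -
  have "sp x y = sp (comb mm (co x)) y" by (rule arg_cong[where f="\<lambda>z. sp z y"], rule expand)
  also have "\<dots> = (\<Sum>i<3. co x i * co y i)"
    by (simp add: comb_def sp_lin co_def sp_sym[of y])
  finally show ?thesis by (simp add: sum3 ddot_def)
qed

lemma eq_coord: assumes h: "\<And>i. i < 3 \<Longrightarrow> co x i = co y i" shows "x = y"
proof -
  have h': "comb mm (co x) = comb mm (co y)" unfolding comb_def using h by (auto intro: sum.cong)
  have "x = comb mm (co x)" by (rule expand)
  also have "\<dots> = comb mm (co y)" by (rule h')
  also have "\<dots> = y" by (rule expand[symmetric])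
  finally show ?thesis .
qed

lemma eq_coord3: "co x 0 = co y 0 \<Longrightarrow> co x 1 = co y 1 \<Longrightarrow> co x 2 = co y 2 \<Longrightarrow> x = y"
  by (rule eq_coord) (auto dest: less3)

lemma eps_coord: "x \<in> epsM smul \<longleftrightarrow> re (co x 0) = 0 \<and> re (co x 1) = 0 \<and> re (co x 2) = 0"
proof
  assume "x \<in> epsM smul"
  then obtain y where "x = smul eps y" using epsM_iff by blast
  then show "re (co x 0) = 0 \<and> re (co x 1) = 0 \<and> re (co x 2) = 0" by simp
next
  assume h: "re (co x 0) = 0 \<and> re (co x 1) = 0 \<and> re (co x 2) = 0"
  define y where "y = comb mm (\<lambda>i. dreal (du (co x i)))"
  have "co (smul eps y) i = co x i" if "i < 3" for i
    using that co_comb[OF that, of "\<lambda>i. dreal (du (co x i))"] h less3[OF that]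
    by (auto simp: y_def dual_eq_iff)
  then have "x = smul eps y" by (intro eq_coord) auto
  then show "x \<in> epsM smul" using epsM_iff by blast
qed

lemma dreal_simps[simp]: "dreal 0 = 0" "dreal 1 = 1" "dreal (-1) = -1"
  by (simp_all add: dual_eq_iff)

lemma cross_coord: "k < 3 \<Longrightarrow> co (cross smul sp OR x y) k = dcrs (co x) (co y) k"
proof -
  assume k: "k < 3"
  have c: "cross smul sp OR x y = comb mm (\<lambda>k. \<Sum>i<3. \<Sum>j<3. co x i * co y j * dreal (levi i j k))"
    by (simp add: cross_def mm_def[symmetric] comb_def co_def Let_def)
  have e: "(\<Sum>i<3. \<Sum>j<3. co x i * co y j * dreal (levi i j k)) = dcrs (co x) (co y) k"
    using less3[OF k] by (elim disjE) (simp_all add: sum3 levi_def dcrs_def)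
  show ?thesis by (simp only: c co_comb[OF k] e)
qed

end

lemma less3g: "i < 3 \<Longrightarrow> i = 0 \<or> i = 1 \<or> i = (2::nat)"
  by auto

lemma re_of_nat[simp]: "re (of_nat n) = of_nat n" and du_of_nat[simp]: "du (of_nat n) = 0"
  by (induction n) auto

lemma re_numeral[simp]: "re (numeral n) = numeral n" and du_numeral[simp]: "du (numeral n) = 0"
  using re_of_nat[of "numeral n"] du_of_nat[of "numeral n"] by (simp_all only: of_nat_numeral)

lemma sq3_pos: "\<not> (a = 0 \<and> b = 0 \<and> c = 0) \<Longrightarrow> a * a + b * b + c * c > (0::real)"
proof -
  assume h: "\<not> (a = 0 \<and> b = 0 \<and> c = 0)"
  show ?thesis
  proof (cases "a \<noteq> 0 \<or> b \<noteq> 0")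
    case True
    then have "a * a + b * b > 0" by (simp add: sum_squares_gt_zero_iff)
    moreover have "c * c \<ge> 0" by simp
    ultimately show ?thesis by linarith
  next
    case False
    then have "c \<noteq> 0" "a = 0" "b = 0" using h by auto
    moreover have "0 < c * c" using \<open>c \<noteq> 0\<close> by (metis not_real_square_gt_zero)
    ultimately show ?thesis by simp
  qed
qed

lemma cramer_id0:
  fixes a b c :: "nat \<Rightarrow> dual"
  shows "(ddot a a * ddot b b - ddot a b * ddot a b) * c 0 =
    (ddot c a * ddot b b - ddot c b * ddot a b) * a 0 + (ddot c b * ddot a a - ddot c a * ddot a b) * b 0
    + ddot (dcrs a b) c * dcrs a b 0"
  unfolding ddot_def dcrs_def by (simp add: algebra_simps)

lemma cramer_id1:
  fixes a b c :: "nat \<Rightarrow> dual"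
  shows "(ddot a a * ddot b b - ddot a b * ddot a b) * c 1 =
    (ddot c a * ddot b b - ddot c b * ddot a b) * a 1 + (ddot c b * ddot a a - ddot c a * ddot a b) * b 1
    + ddot (dcrs a b) c * dcrs a b 1"
  unfolding ddot_def dcrs_def by (simp add: algebra_simps)

lemma cramer_id2:
  fixes a b c :: "nat \<Rightarrow> dual"
  shows "(ddot a a * ddot b b - ddot a b * ddot a b) * c 2 =
    (ddot c a * ddot b b - ddot c b * ddot a b) * a 2 + (ddot c b * ddot a a - ddot c a * ddot a b) * b 2
    + ddot (dcrs a b) c * dcrs a b 2"
  unfolding ddot_def dcrs_def by (simp add: algebra_simps)

lemma cramer_id:
  fixes a b c :: "nat \<Rightarrow> dual"
  assumes "k < 3"
  shows "(ddot a a * ddot b b - ddot a b * ddot a b) * c k =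
    (ddot c a * ddot b b - ddot c b * ddot a b) * a k + (ddot c b * ddot a a - ddot c a * ddot a b) * b k
    + ddot (dcrs a b) c * dcrs a b k"
  using less3g[OF assms] cramer_id0 cramer_id1 cramer_id2 by blast

context dset
begin

lemma triple_coord: "sp (cross smul sp OR x y) z = ddot (dcrs (co x) (co y)) (co z)"
proof -
  have "sp (cross smul sp OR x y) z = ddot (co (cross smul sp OR x y)) (co z)" by (rule sp_coord)
  also have "\<dots> = ddot (dcrs (co x) (co y)) (co z)"
  proof -
    have c0: "co (cross smul sp OR x y) 0 = dcrs (co x) (co y) 0" by (rule cross_coord) simp
    have c1: "co (cross smul sp OR x y) 1 = dcrs (co x) (co y) 1" by (rule cross_coord) simp
    have c2: "co (cross smul sp OR x y) 2 = dcrs (co x) (co y) 2" by (rule cross_coord) simp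
    show ?thesis unfolding ddot_def c0 c1 c2 ..
  qed
  finally show ?thesis .
qed

lemma not_eps_pos: assumes "x \<notin> epsM smul"
  shows "re (co x 0) * re (co x 0) + re (co x 1) * re (co x 1) + re (co x 2) * re (co x 2) > 0"
proof -
  have "\<not> (re (co x 0) = 0 \<and> re (co x 1) = 0 \<and> re (co x 2) = 0)" using assms eps_coord by blast
  then show ?thesis
    by (rule sq3_pos)
qed

lemma dindep2_sym: "dindep2 smul x y \<Longrightarrow> dindep2 smul y x"
  unfolding dindep2_def by (metis add.commute)

lemma realcross_ne:
  assumes ind: "dindep2 smul x y" and xe: "x \<notin> epsM smul"
  defines "p \<equiv> \<lambda>i. re (co x i)" and "q \<equiv> \<lambda>i. re (co y i)"
  shows "\<not> (p 1 * q 2 - p 2 * q 1 = 0 \<and> p 2 * q 0 - p 0 * q 2 = 0 \<and> p 0 * q 1 - p 1 * q 0 = 0)"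
proof
  assume h: "p 1 * q 2 - p 2 * q 1 = 0 \<and> p 2 * q 0 - p 0 * q 2 = 0 \<and> p 0 * q 1 - p 1 * q 0 = 0"
  define P where "P = p 0 * p 0 + p 1 * p 1 + p 2 * p 2"
  define s where "s = p 0 * q 0 + p 1 * q 1 + p 2 * q 2"
  have P: "P > 0" using not_eps_pos[OF xe] by (simp add: P_def p_def)
  define c0 where "c0 = p 1 * q 2 - p 2 * q 1"
  define c1 where "c1 = p 2 * q 0 - p 0 * q 2"
  define c2 where "c2 = p 0 * q 1 - p 1 * q 0"
  have hc: "c0 = 0" "c1 = 0" "c2 = 0" using h by (simp_all add: c0_def c1_def c2_def)
  have e0: "s * p 0 - P * q 0 = p 1 * c2 - p 2 * c1"
    by (simp add: s_def P_def c1_def c2_def algebra_simps)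
  have e1: "s * p 1 - P * q 1 = p 2 * c0 - p 0 * c2"
    by (simp add: s_def P_def c0_def c2_def algebra_simps)
  have e2: "s * p 2 - P * q 2 = p 0 * c1 - p 1 * c0"
    by (simp add: s_def P_def c0_def c1_def algebra_simps)
  have z: "s * p i - P * q i = 0" if "i < 3" for i
    using less3[OF that] by (elim disjE) (simp_all only: e0 e1 e2 hc mult_zero_right diff_self)
  have "smul (eps * dreal s) x + smul (- (eps * dreal P)) y = 0"
  proof (rule eq_coord)
    fix i :: nat assume "i < 3"
    then show "co (smul (eps * dreal s) x + smul (- (eps * dreal P)) y) i = co 0 i"
      using z[of i] by (simp add: dual_eq_iff p_def q_def)
  qed
  then have "- (eps * dreal P) = 0" using ind unfolding dindep2_def by blast
  then show False using P by (simp add: dual_eq_iff)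
qed

lemma gram_pos:
  assumes ind: "dindep2 smul x y" and xe: "x \<notin> epsM smul"
  shows "re (ddot (co x) (co x) * ddot (co y) (co y) - ddot (co x) (co y) * ddot (co x) (co y)) > 0"
proof -
  define p where "p = (\<lambda>i. re (co x i))"
  define q where "q = (\<lambda>i. re (co y i))"
  have nz: "\<not> (p 1 * q 2 - p 2 * q 1 = 0 \<and> p 2 * q 0 - p 0 * q 2 = 0 \<and> p 0 * q 1 - p 1 * q 0 = 0)"
    using realcross_ne[OF ind xe] by (simp add: p_def q_def)
  have "re (ddot (co x) (co x) * ddot (co y) (co y) - ddot (co x) (co y) * ddot (co x) (co y))
     = (p 1 * q 2 - p 2 * q 1) * (p 1 * q 2 - p 2 * q 1) + (p 2 * q 0 - p 0 * q 2) * (p 2 * q 0 - p 0 * q 2)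
       + (p 0 * q 1 - p 1 * q 0) * (p 0 * q 1 - p 1 * q 0)"
    by (simp add: ddot_def p_def q_def algebra_simps)
  also have "\<dots> > 0" using nz
    by (rule sq3_pos)
  finally show ?thesis .
qed

lemma triple_zero_comb:
  assumes ind: "dindep2 smul x y" and xe: "x \<notin> epsM smul"
    and t: "ddot (dcrs (co x) (co y)) (co z) = 0"
  shows "\<exists>\<alpha> \<beta>. z = smul \<alpha> x + smul \<beta> y"
proof -
  let ?a = "co x" and ?b = "co y" and ?c = "co z"
  define N where "N = ddot ?a ?a * ddot ?b ?b - ddot ?a ?b * ddot ?a ?b"
  define A where "A = ddot ?c ?a * ddot ?b ?b - ddot ?c ?b * ddot ?a ?b"
  define B where "B = ddot ?c ?b * ddot ?a ?a - ddot ?c ?a * ddot ?a ?b"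
  have N: "N * dinv N = 1" using gram_pos[OF ind xe] dinv_mult by (simp add: N_def)
  have "z = smul (dinv N * A) x + smul (dinv N * B) y"
  proof (rule eq_coord)
    fix k :: nat assume k: "k < 3"
    have "N * ?c k = A * ?a k + B * ?b k"
      using cramer_id[OF k, of ?a ?b ?c] t by (simp add: N_def A_def B_def)
    then have "dinv N * (N * ?c k) = dinv N * (A * ?a k + B * ?b k)" by simp
    have "co z k = (N * dinv N) * co z k" using N by simp
    also have "\<dots> = dinv N * (N * co z k)" by (simp only: ac_simps)
    also have "\<dots> = dinv N * (A * ?a k + B * ?b k)" using \<open>N * ?c k = A * ?a k + B * ?b k\<close> by simp
    finally show "co z k = co (smul (dinv N * A) x + smul (dinv N * B) y) k"
      by (simp add: algebra_simps)
  qed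
  then show ?thesis by blast
qed

lemma solve_comb:
  assumes e: "x = smul a y + smul b z" and ind: "dindep2 smul y x"
  shows "\<exists>a' b'. z = smul a' x + smul b' y"
proof -
  have rb: "re b \<noteq> 0"
  proof
    assume "re b = 0"
    then have eb: "eps * b = 0" by (simp add: dual_eq_iff)
    have "smul eps x = smul (eps * a) y + smul (eps * b) z" using e by (simp add: scale_right_distrib)
    then have "smul (- (eps * a)) y + smul eps x = 0" using eb by simp
    then have "eps = 0" using ind unfolding dindep2_def by blast
    then show False using eps_ne0 by simp
  qed
  have bi: "dinv b * b = 1" using dinv_mult[OF rb] by (simp add: mult.commute)
  have "smul (dinv b) x = smul (dinv b * a) y + z" using e bi by (simp add: scale_right_distrib)
  then have "z = smul (dinv b) x + smul (- (dinv b * a)) y" by (simp add: algebra_simps)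
  then show ?thesis by blast
qed

lemma comb_triple:
  assumes "x = smul a y + smul b z"
  shows "ddot (dcrs (co x) (co y)) (co z) = 0" "ddot (dcrs (co y) (co x)) (co z) = 0"
    "ddot (dcrs (co y) (co z)) (co x) = 0"
proof -
  have h: "co x i = a * co y i + b * co z i" for i using assms by simp
  show "ddot (dcrs (co x) (co y)) (co z) = 0" "ddot (dcrs (co y) (co x)) (co z) = 0"
    "ddot (dcrs (co y) (co z)) (co x) = 0"
    unfolding ddot_def dcrs_def h by (simp_all add: algebra_simps)
qed

lemma part_i_ii:
  assumes "z1 \<notin> epsM smul" "z2 \<notin> epsM smul" "z3 \<notin> epsM smul"
    and i12: "dindep2 smul z1 z2" and i13: "dindep2 smul z1 z3" and i23: "dindep2 smul z2 z3"
  shows "(sp (cross smul sp OR z1 z2) z3 = 0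
            \<longleftrightarrow> dcomb smul z1 z2 z3 \<or> dcomb smul z2 z1 z3 \<or> dcomb smul z3 z1 z2)
       \<and> (sp (cross smul sp OR z1 z2) z3 = 0
            \<longrightarrow> dcomb smul z1 z2 z3 \<and> dcomb smul z2 z1 z3 \<and> dcomb smul z3 z1 z2)"
proof -
  have fwd: "dcomb smul z1 z2 z3 \<and> dcomb smul z2 z1 z3 \<and> dcomb smul z3 z1 z2"
    if t: "sp (cross smul sp OR z1 z2) z3 = 0"
  proof -
    obtain \<alpha> \<beta> where e: "z3 = smul \<alpha> z1 + smul \<beta> z2"
      using triple_zero_comb[OF i12 assms(1)] t triple_coord by metis
    have e': "z3 = smul \<beta> z2 + smul \<alpha> z1" using e by (simp add: add.commute)
    obtain a b where "z1 = smul a z3 + smul b z2" using solve_comb[OF e' i23] by blast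
    then have c1: "dcomb smul z1 z2 z3" unfolding dcomb_def by (metis add.commute)
    obtain a' b' where "z2 = smul a' z3 + smul b' z1" using solve_comb[OF e i13] by blast
    then have c2: "dcomb smul z2 z1 z3" unfolding dcomb_def by (metis add.commute)
    have c3: "dcomb smul z3 z1 z2" unfolding dcomb_def using e by blast
    show ?thesis using c1 c2 c3 by blast
  qed
  have bwd: "sp (cross smul sp OR z1 z2) z3 = 0"
    if "dcomb smul z1 z2 z3 \<or> dcomb smul z2 z1 z3 \<or> dcomb smul z3 z1 z2"
  proof -
    have T: "sp (cross smul sp OR z1 z2) z3 = ddot (dcrs (co z1) (co z2)) (co z3)" by (rule triple_coord)
    have r1: "ddot (dcrs a b) c = ddot (dcrs b c) a" for a b c
      by (simp add: ddot_def dcrs_def algebra_simps)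
    have r2: "ddot (dcrs a b) c = - ddot (dcrs b a) c" for a b c
      by (simp add: ddot_def dcrs_def algebra_simps)
    from that show ?thesis unfolding T dcomb_def
    proof (elim disjE exE)
      fix a b assume "z1 = smul a z2 + smul b z3"
      then show "ddot (dcrs (co z1) (co z2)) (co z3) = 0" using comb_triple(1) by blast
    next
      fix a b assume "z2 = smul a z1 + smul b z3"
      then show "ddot (dcrs (co z1) (co z2)) (co z3) = 0" using comb_triple(2) by blast
    next
      fix a b assume "z3 = smul a z1 + smul b z2"
      then show "ddot (dcrs (co z1) (co z2)) (co z3) = 0" using comb_triple(3) r1 by metis
    qed
  qed
  show ?thesis using fwd bwd by blast
qed

end

lemma det3_kernel:
  fixes R :: "nat \<Rightarrow> nat \<Rightarrow> real"
  assumes "det3 R = 0"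
  shows "\<exists>c. (\<forall>j<3. (\<Sum>i<3. c i * R i j) = 0) \<and> \<not> (\<forall>i<3. c i = 0)"
proof -
  define idx :: "3 \<Rightarrow> nat" where "idx x = (if x = 1 then 0 else if x = 2 then 1 else 2)" for x
  define jdx :: "nat \<Rightarrow> 3" where "jdx i = (if i = 0 then 1 else if i = 1 then 2 else 3)" for i
  have i1: "idx 1 = 0" "idx 2 = 1" "idx 3 = 2" by (simp_all add: idx_def)
  have ij: "idx (jdx j) = j" if "j < 3" for j using less3g[OF that] by (auto simp: idx_def jdx_def)
  define Mt :: "real^3^3" where "Mt = (\<chi> a b. R (idx b) (idx a))"
  have "det Mt = det3 R" unfolding Mt_def det_3 det3_def by (simp add: i1 algebra_simps)
  then have "det (matrix ((*v) Mt)) = 0" using assms by (simp add: matrix_of_matrix_vector_mul)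
  then have "\<not> inj ((*v) Mt)" using det_nz_iff_inj[of "(*v) Mt"] matrix_vector_mul_linear by blast
  then obtain x y where xy: "x \<noteq> y" "Mt *v x = Mt *v y" unfolding inj_def by blast
  define w where "w = x - y"
  have w0: "Mt *v w = 0" using xy by (simp add: w_def matrix_vector_mult_diff_distrib)
  have wn: "w \<noteq> 0" using xy by (simp add: w_def)
  define c where "c i = w $ jdx i" for i
  have comp: "(Mt *v w) $ a = (\<Sum>i<3. c i * R i (idx a))" for a
    unfolding matrix_vector_mult_def Mt_def c_def jdx_def
    by (simp add: sum_3 sum3 i1 algebra_simps)
  have "(\<Sum>i<3. c i * R i j) = 0" if "j < 3" for j
    using comp[of "jdx j"] w0 ij[OF that] by simp
  moreover have "\<not> (\<forall>i<3. c i = 0)"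
  proof
    assume h: "\<forall>i<3. c i = 0"
    have "w $ a = 0" for a
      using exhaust_3[of a] h by (auto simp: c_def jdx_def all3)
    then show False using wn by (simp add: vec_eq_iff)
  qed
  ultimately show ?thesis by blast
qed

lemma det3_solve:
  fixes R :: "nat \<Rightarrow> nat \<Rightarrow> real" and t :: "nat \<Rightarrow> real"
  assumes D: "det3 R \<noteq> 0"
  shows "\<exists>c. \<forall>k<3. (\<Sum>i<3. c i * R i k) = t k"
proof -
  define C where "C i j = R ((i+1) mod 3) ((j+1) mod 3) * R ((i+2) mod 3) ((j+2) mod 3)
     - R ((i+1) mod 3) ((j+2) mod 3) * R ((i+2) mod 3) ((j+1) mod 3)" for i j
  define c where "c i = (\<Sum>j<3. t j * C i j) / det3 R" for i
  have "(\<Sum>i<3. c i * R i k) = t k" if "k < 3" for k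
  proof -
    have "(\<Sum>i<3. (\<Sum>j<3. t j * C i j) * R i k) = t k * det3 R"
      using less3g[OF that] by (elim disjE) (simp_all add: sum3 C_def det3_def numeral_2_eq_2 algebra_simps)
    then show ?thesis using D by (simp add: c_def sum_divide_distrib[symmetric] field_simps)
  qed
  then show ?thesis by blast
qed

context dset
begin

lemma co_sum: "co (sum f S) i = (\<Sum>s\<in>S. co (f s) i)"
  by (induction S rule: infinite_finite_induct) auto

lemma co_mm: "i < 3 \<Longrightarrow> j < 3 \<Longrightarrow> co (mm i) j = (if i = j then 1 else 0)"
  by (simp add: co_def mm_sp)

lemma eps_diff: "x \<in> epsM smul \<Longrightarrow> y \<in> epsM smul \<Longrightarrow> x - y \<in> epsM smul"
  by (simp add: eps_coord)

lemma E_zero: "P \<in> Espace smul sp \<Longrightarrow> 0 \<in> P"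
  by (simp add: Espace_def real_subspace_def)
lemma E_add: "P \<in> Espace smul sp \<Longrightarrow> x \<in> P \<Longrightarrow> y \<in> P \<Longrightarrow> x + y \<in> P"
  by (simp add: Espace_def real_subspace_def)
lemma E_smul: "P \<in> Espace smul sp \<Longrightarrow> x \<in> P \<Longrightarrow> smul (dreal r) x \<in> P"
  by (simp add: Espace_def real_subspace_def)
lemma E_minus: "P \<in> Espace smul sp \<Longrightarrow> x \<in> P \<Longrightarrow> - x \<in> P"
  using E_smul[of P x "-1"] by simp
lemma E_diff: "P \<in> Espace smul sp \<Longrightarrow> x \<in> P \<Longrightarrow> y \<in> P \<Longrightarrow> x - y \<in> P"
  using E_add[of P x "- y"] E_minus[of P y] by simp
lemma E_eps: "P \<in> Espace smul sp \<Longrightarrow> x \<in> P \<Longrightarrow> x \<in> epsM smul \<Longrightarrow> x = 0"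
  by (auto simp: Espace_def)
lemma E_du: "P \<in> Espace smul sp \<Longrightarrow> x \<in> P \<Longrightarrow> y \<in> P \<Longrightarrow> du (sp x y) = 0"
  by (simp add: Espace_def)

lemma E_sum3: "P \<in> Espace smul sp \<Longrightarrow> (\<And>i::nat. i < 3 \<Longrightarrow> v i \<in> P) \<Longrightarrow>
   (\<Sum>i<3. smul (dreal (c i)) (v i)) \<in> P"
  unfolding sum3 by (intro E_add E_smul) auto

lemma co_sum3: "co (\<Sum>i<3. smul (dreal (c i)) (v i)) k = (\<Sum>i<3. dreal (c i) * co (v i) k)"
  by (simp add: co_sum)

lemma E_lift_ex:
  assumes P: "P \<in> Espace smul sp"
  shows "\<exists>y\<in>P. \<forall>k<3. re (co y k) = t k"
proof -
  obtain v where v: "\<forall>i<3. v i \<in> P"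
    and ind: "\<forall>c :: nat \<Rightarrow> real. (\<Sum>i<3. smul (dreal (c i)) (v i)) = 0 \<longrightarrow> (\<forall>i<3. c i = 0)"
    using P unfolding Espace_def real_dim3_def by blast
  define R where "R i j = re (co (v i) j)" for i j
  have reco: "re (co (\<Sum>i<3. smul (dreal (c i)) (v i)) k) = (\<Sum>i<3. c i * R i k)" for c k
    by (simp add: co_sum R_def)
  have D: "det3 R \<noteq> 0"
  proof
    assume "det3 R = 0"
    then obtain c where c: "\<forall>j<3. (\<Sum>i<3. c i * R i j) = 0" and nz: "\<not> (\<forall>i<3. c i = 0)"
      using det3_kernel by blast
    let ?x = "\<Sum>i<3. smul (dreal (c i)) (v i)"
    have "?x \<in> P" using E_sum3[OF P] v by blast
    moreover have "?x \<in> epsM smul" unfolding eps_coord reco using c by simp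
    ultimately have "?x = 0" using E_eps[OF P] by blast
    then show False using ind nz by blast
  qed
  obtain c where c: "\<forall>k<3. (\<Sum>i<3. c i * R i k) = t k" using det3_solve[OF D] by blast
  let ?y = "\<Sum>i<3. smul (dreal (c i)) (v i)"
  have "?y \<in> P" using E_sum3[OF P] v by blast
  moreover have "\<forall>k<3. re (co ?y k) = t k" using c reco by simp
  ultimately show ?thesis by blast
qed

lemma lift_eq:
  assumes P: "P \<in> Espace smul sp" and i: "i < 3" and y: "y \<in> P" "y - mm i \<in> epsM smul"
  shows "lift smul P (mm i) = y"
  unfolding lift_def
proof (rule the_equality)
  show "y \<in> P \<and> y - mm i \<in> epsM smul" using y by blast
  fix y' assume y': "y' \<in> P \<and> y' - mm i \<in> epsM smul"
  have "y' - y = (y' - mm i) - (y - mm i)" by simp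
  then have "y' - y \<in> epsM smul" using eps_diff y' y by metis
  moreover have "y' - y \<in> P" using E_diff[OF P] y y' by blast
  ultimately have "y' - y = 0" using E_eps[OF P] by blast
  then show "y' = y" by simp
qed

definition fP :: "'m set \<Rightarrow> nat \<Rightarrow> 'm" where "fP P i = lift smul P (mm i)"
definition GP :: "'m set \<Rightarrow> nat \<Rightarrow> nat \<Rightarrow> real" where "GP P i l = du (co (fP P i) l)"

lemma fP_char:
  assumes P: "P \<in> Espace smul sp" and i: "i < 3"
  shows "fP P i \<in> P" "\<And>k. k < 3 \<Longrightarrow> re (co (fP P i) k) = (if i = k then 1 else 0)"
proof -
  from E_lift_ex[OF P, of "\<lambda>k. if i = k then 1 else 0"]
  obtain y where y1: "y \<in> P" and y2: "\<And>k. k < 3 \<Longrightarrow> re (co y k) = (if i = k then 1 else 0)"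
    by auto
  have "re (co (y - mm i) k) = 0" if "k < 3" for k
    using y2[OF that] co_mm[OF i that] by simp
  then have "y - mm i \<in> epsM smul" unfolding eps_coord by simp
  then have e: "fP P i = y" unfolding fP_def by (rule lift_eq[OF P i y1])
  show "fP P i \<in> P" unfolding e by (rule y1)
  show "\<And>k. k < 3 \<Longrightarrow> re (co (fP P i) k) = (if i = k then 1 else 0)" unfolding e by (rule y2)
qed

lemma E_rep:
  assumes P: "P \<in> Espace smul sp" and x: "x \<in> P" and k: "k < 3"
  shows "du (co x k) = (\<Sum>i<3. re (co x i) * GP P i k)"
proof -
  let ?s = "\<Sum>i<3. smul (dreal (re (co x i))) (fP P i)"
  have sP: "?s \<in> P" by (rule E_sum3[OF P]) (rule fP_char(1)[OF P])
  have re_s: "re (co ?s j) = re (co x j)" if "j < 3" for j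
    using less3[OF that] by (auto simp: co_sum sum3 fP_char(2)[OF P])
  have "x - ?s \<in> epsM smul" unfolding eps_coord using re_s by simp
  moreover have "x - ?s \<in> P" using E_diff[OF P x sP] .
  ultimately have "x - ?s = 0" using E_eps[OF P] by blast
  then have "x = ?s" by (simp only: right_minus_eq)
  then have "du (co x k) = du (co ?s k)" by (rule arg_cong)
  also have "\<dots> = (\<Sum>i<3. re (co x i) * GP P i k)" by (simp add: co_sum GP_def)
  finally show ?thesis .
qed

lemma G_anti:
  assumes P: "P \<in> Espace smul sp" and i: "i < 3" and l: "l < 3"
  shows "GP P i l + GP P l i = 0"
proof -
  have "du (sp (fP P i) (fP P l)) = 0" using E_du[OF P] fP_char(1)[OF P] i l by blast
  then have "du (ddot (co (fP P i)) (co (fP P l))) = 0" by (simp add: sp_coord)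
  then show ?thesis using less3[OF i] less3[OF l]
    by (auto simp: ddot_def fP_char(2)[OF P] GP_def)
qed

lemma diffE_extract:
  assumes A: "A \<in> Espace smul sp" and B: "B \<in> Espace smul sp" and dE: "diffE smul sp OR B A v"
  shows "\<exists>d. (\<forall>k<3. re (co v k) = d k) \<and>
     (\<forall>i<3. \<forall>l<3. GP B i l = GP A i l + (\<Sum>k<3. levi i l k * d k))"
proof -
  obtain d where d1: "v - (\<Sum>k<3. smul (dreal (d k)) (mm k)) \<in> epsM smul"
    and d2: "\<forall>i<3. fP B i = fP A i +
                 smul eps (\<Sum>j<3. \<Sum>k<3. smul (dreal (levi i j k * d k)) (fP A j))"
    using dE unfolding diffE_def mm_def[symmetric] Let_def fP_def by blast
  have "re (co v k) = d k" if "k < 3" for k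
  proof -
    have "re (co (v - (\<Sum>k<3. smul (dreal (d k)) (mm k))) k) = 0"
      using d1 less3[OF that] unfolding eps_coord by auto
    then show ?thesis using less3[OF that] by (auto simp: co_sum sum3 co_mm)
  qed
  moreover have "GP B i l = GP A i l + (\<Sum>k<3. levi i l k * d k)" if i: "i < 3" and l: "l < 3" for i l
  proof -
    have "co (fP B i) l = co (fP A i) l +
       eps * (\<Sum>j<3. \<Sum>k<3. dreal (levi i j k * d k) * co (fP A j) l)"
      using d2 i by (simp add: co_sum)
    then have "GP B i l = GP A i l + (\<Sum>j<3. \<Sum>k<3. levi i j k * d k * re (co (fP A j) l))"
      by (simp add: GP_def)
    also have "\<dots> = GP A i l + (\<Sum>k<3. levi i l k * d k)"
      using less3[OF l] by (auto simp: sum3 fP_char(2)[OF A])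
    finally show ?thesis .
  qed
  ultimately show ?thesis by blast
qed

section \<open>Explicit points of E\<close>

definition Gv :: "(nat \<Rightarrow> real) \<Rightarrow> nat \<Rightarrow> nat \<Rightarrow> real" where
  "Gv c i l = (\<Sum>m<3. levi i l m * c m)"

definition Pt :: "(nat \<Rightarrow> real) \<Rightarrow> 'm set" where
  "Pt c = {x. \<forall>l<3. du (co x l) = (\<Sum>i<3. re (co x i) * Gv c i l)}"

definition hh :: "(nat \<Rightarrow> real) \<Rightarrow> nat \<Rightarrow> 'm" where
  "hh c i = comb mm (\<lambda>l. Dual (if i = l then 1 else 0) (Gv c i l))"

lemma co_hh: "l < 3 \<Longrightarrow> co (hh c i) l = Dual (if i = l then 1 else 0) (Gv c i l)"
  by (simp add: hh_def co_comb)

lemma Gv_vals: "Gv c 0 0 = 0" "Gv c 1 1 = 0" "Gv c 2 2 = 0"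
  "Gv c 0 1 = c 2" "Gv c 1 0 = - c 2" "Gv c 1 2 = c 0" "Gv c 2 1 = - c 0"
  "Gv c 2 0 = c 1" "Gv c 0 2 = - c 1"
  by (simp_all add: Gv_def sum3 levi_def)

lemma Gv_vals': "Gv c (Suc 0) (Suc 0) = 0"
  "Gv c 0 (Suc 0) = c 2" "Gv c (Suc 0) 0 = - c 2" "Gv c (Suc 0) 2 = c 0" "Gv c 2 (Suc 0) = - c 0"
  "Gv c 2 0 = c (Suc 0)" "Gv c 0 2 = - c (Suc 0)"
  by (simp_all add: Gv_def sum3 levi_def)

lemma hh_Pt: "i < 3 \<Longrightarrow> hh c i \<in> Pt c"
  unfolding Pt_def using less3[of i]
  by (auto simp: co_hh sum3 dest!: less3)

lemma Pt_E: "Pt c \<in> Espace smul sp"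
proof -
  have sub: "real_subspace smul (Pt c)"
    unfolding real_subspace_def Pt_def
    by (auto simp: sum.distrib distrib_right sum_distrib_left algebra_simps)
  have dim: "real_dim3 smul (Pt c)"
    unfolding real_dim3_def
  proof (intro exI[of _ "hh c"] conjI allI impI ballI)
    show "\<And>i. i < 3 \<Longrightarrow> hh c i \<in> Pt c" by (rule hh_Pt)
  next
    fix x assume x: "x \<in> Pt c"
    have "x = (\<Sum>i<3. smul (dreal (re (co x i))) (hh c i))"
    proof (rule eq_coord)
      fix l :: nat assume l: "l < 3"
      have "du (co x l) = (\<Sum>i<3. re (co x i) * Gv c i l)" using x l by (simp add: Pt_def)
      then show "co x l = co (\<Sum>i<3. smul (dreal (re (co x i))) (hh c i)) l"
        using less3[OF l] by (auto simp: co_sum co_hh sum3 dual_eq_iff)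
    qed
    then show "\<exists>r :: nat \<Rightarrow> real. x = (\<Sum>i<3. smul (dreal (r i)) (hh c i))"
      by (rule exI[of _ "\<lambda>i. re (co x i)"])
  next
    fix r :: "nat \<Rightarrow> real" and i :: nat
    assume h: "(\<Sum>i<3. smul (dreal (r i)) (hh c i)) = 0" and i: "i < 3"
    have "re (co (\<Sum>i<3. smul (dreal (r i)) (hh c i)) i) = r i"
      using less3[OF i] by (auto simp: co_sum co_hh sum3)
    then show "r i = 0" using h by simp
  qed
  have du: "du (sp x y) = 0" if x: "x \<in> Pt c" and y: "y \<in> Pt c" for x y
  proof -
    have hx: "du (co x l) = (\<Sum>i<3. re (co x i) * Gv c i l)" if "l < 3" for l
      using x that by (simp add: Pt_def)
    have hy: "du (co y l) = (\<Sum>i<3. re (co y i) * Gv c i l)" if "l < 3" for l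
      using y that by (simp add: Pt_def)
    have hx0: "du (co x 0) = re (co x 1) * (- c 2) + re (co x 2) * c 1" using hx[of 0] by (simp add: sum3 Gv_vals Gv_vals')
    have hx1: "du (co x 1) = re (co x 0) * c 2 + re (co x 2) * (- c 0)" using hx[of 1] by (simp add: sum3 Gv_vals Gv_vals')
    have hx2: "du (co x 2) = re (co x 0) * (- c 1) + re (co x 1) * c 0" using hx[of 2] by (simp add: sum3 Gv_vals Gv_vals')
    have hy0: "du (co y 0) = re (co y 1) * (- c 2) + re (co y 2) * c 1" using hy[of 0] by (simp add: sum3 Gv_vals Gv_vals')
    have hy1: "du (co y 1) = re (co y 0) * c 2 + re (co y 2) * (- c 0)" using hy[of 1] by (simp add: sum3 Gv_vals Gv_vals')
    have hy2: "du (co y 2) = re (co y 0) * (- c 1) + re (co y 1) * c 0" using hy[of 2] by (simp add: sum3 Gv_vals Gv_vals')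
    have dd: "du (ddot a b) = re (a 0) * du (b 0) + du (a 0) * re (b 0) + (re (a 1) * du (b 1) + du (a 1) * re (b 1))
       + (re (a 2) * du (b 2) + du (a 2) * re (b 2))" for a b
      by (simp add: ddot_def)
    have "du (sp x y) = du (ddot (co x) (co y))" by (rule arg_cong[where f=du], rule sp_coord)
    also have "\<dots> = re (co x 0) * du (co y 0) + du (co x 0) * re (co y 0) + (re (co x 1) * du (co y 1) + du (co x 1) * re (co y 1))
       + (re (co x 2) * du (co y 2) + du (co x 2) * re (co y 2))" by (rule dd)
    also have "\<dots> = 0" unfolding hx0 hx1 hx2 hy0 hy1 hy2 by (simp add: algebra_simps)
    finally show ?thesis .
  qed
  have eps: "Pt c \<inter> epsM smul = {0}"
  proof (intro equalityI subsetI)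
    fix x assume "x \<in> Pt c \<inter> epsM smul"
    then have x: "x \<in> Pt c" and e: "re (co x 0) = 0" "re (co x 1) = 0" "re (co x 2) = 0"
      by (auto simp: eps_coord)
    have "co x l = co 0 l" if "l < 3" for l
    proof -
      have "du (co x l) = 0" using x that e by (simp add: Pt_def sum3)
      then show ?thesis using e less3[OF that] by (auto simp: dual_eq_iff)
    qed
    then show "x \<in> {0}" using eq_coord by blast
  next
    fix x assume "x \<in> {0::'m}"
    then show "x \<in> Pt c \<inter> epsM smul" by (simp add: Pt_def eps_coord)
  qed
  show ?thesis unfolding Espace_def using sub dim du eps by blast
qed

lemma lift_Pt: "i < 3 \<Longrightarrow> lift smul (Pt c) (mm i) = hh c i"
  by (rule lift_eq[OF Pt_E]) (auto simp: hh_Pt eps_coord co_hh co_mm)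

lemma unit_unique:
  assumes u: "sp u u = 1" and v: "sp v v = 1" and a: "a > 0" and a': "a' > 0"
    and e: "smul (Dual a b) u = smul (Dual a' b') v"
  shows "u = v"
proof -
  define D' where "D' = Dual a' b'"
  define lam where "lam = dinv D' * Dual a b"
  have DD: "dinv D' * D' = 1" using dinv_mult[of D'] a' by (simp add: D'_def mult.commute)
  have "smul lam u = smul (dinv D') (smul (Dual a b) u)" by (simp add: lam_def)
  also have "\<dots> = smul (dinv D' * D') v" using e by (simp add: D'_def)
  finally have vl: "v = smul lam u" using DD by simp
  have "lam * lam = 1" using v u unfolding vl by (simp add: sp_lin)
  then have r: "re lam * re lam = 1" and d: "2 * re lam * du lam = 0"
    by (auto simp: dual_eq_iff algebra_simps)
  have "re lam > 0" using a a' by (simp add: lam_def D'_def)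
  moreover have "(re lam - 1) * (re lam + 1) = 0" using r by (simp add: algebra_simps)
  ultimately have "re lam = 1" by auto
  moreover then have "du lam = 0" using d by simp
  ultimately have "lam = 1" by (simp add: dual_eq_iff)
  then show ?thesis using vl by simp
qed

lemma unit_part_eq:
  assumes z: "z \<notin> epsM smul"
  shows "unit_part smul sp z = smul (nr z) z"
    "sp (smul (nr z) z) (smul (nr z) z) = 1"
    "z = smul (dsqrt (sp z z)) (smul (nr z) z)" "re (dsqrt (sp z z)) > 0"
proof -
  have s: "re (sp z z) > 0" using sp_re_pos[OF z] .
  show u1: "sp (smul (nr z) z) (smul (nr z) z) = 1" using nr_facts(2)[OF z] .
  show ze: "z = smul (dsqrt (sp z z)) (smul (nr z) z)" using nr_facts(3)[OF z] by simp
  show rp: "re (dsqrt (sp z z)) > 0" using s by (simp add: dsqrt_re)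
  show "unit_part smul sp z = smul (nr z) z"
    unfolding unit_part_def
  proof (rule the_equality)
    let ?D = "dsqrt (sp z z)"
    have "?D = Dual (re ?D) (du ?D)" by simp
    then show "sp (smul (nr z) z) (smul (nr z) z) = 1 \<and>
      (\<exists>a b. a > 0 \<and> z = smul (Dual a b) (smul (nr z) z))"
      using u1 ze rp by metis
    fix u assume h: "sp u u = 1 \<and> (\<exists>a b. a > 0 \<and> z = smul (Dual a b) u)"
    then obtain a b where ab: "a > 0" "z = smul (Dual a b) u" by blast
    have "smul (Dual a b) u = smul ?D (smul (nr z) z)" using ab(2) ze by (rule trans[OF sym])
    then have "smul (Dual a b) u = smul (Dual (re ?D) (du ?D)) (smul (nr z) z)" by simp
    then show "u = smul (nr z) z" using unit_unique h u1 ab(1) rp by blast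
  qed
qed

end

definition rdot :: "(nat \<Rightarrow> real) \<Rightarrow> (nat \<Rightarrow> real) \<Rightarrow> real" where
  "rdot x y = x 0 * y 0 + x 1 * y 1 + x 2 * y 2"

definition rcrs :: "(nat \<Rightarrow> real) \<Rightarrow> (nat \<Rightarrow> real) \<Rightarrow> nat \<Rightarrow> real" where
  "rcrs x y k = (if k = 0 then x 1 * y 2 - x 2 * y 1 else if k = 1 then x 2 * y 0 - x 0 * y 2
     else x 0 * y 1 - x 1 * y 0)"

lemma pure_id:
  fixes p q r s :: "nat \<Rightarrow> real"
  assumes "l < 3"
  shows "rcrs (rcrs r s) p l + rdot (rcrs p q) r * rcrs r p l - rdot r r * rdot p p * q l
   = s l * rdot r p - r l * rdot s p - rdot q r * rdot p p * r l - rdot r p * rdot r p * q l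
     - rdot q p * rcrs (rcrs r p) r l + rdot q r * rdot r p * p l"
  using less3g[OF assms] by (elim disjE) (simp_all add: rdot_def rcrs_def algebra_simps)

lemma key_real:
  fixes p q r s :: "nat \<Rightarrow> real"
  assumes l: "l < 3" and pp: "rdot p p = 1" and qp: "rdot q p = 0" and rp: "rdot r p = 0"
    and sp: "rdot s p = - rdot q r"
  shows "rdot r r * q l = rcrs (rcrs r s) p l + rdot (rcrs p q) r * rcrs r p l"
  using pure_id[OF l, of r s p q] pp qp rp sp by (simp add: algebra_simps)

lemma triple_id:
  fixes a b c e :: "nat \<Rightarrow> dual"
  assumes "k < 3"
  shows "ddot (dcrs a b) c * e k = ddot a e * dcrs b c k + ddot b e * dcrs c a k + ddot c e * dcrs a b k"
  using less3g[OF assms] by (elim disjE) (simp_all add: ddot_def dcrs_def algebra_simps)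

context dset
begin

lemma dd_expand: "du (ddot a b) = re (a 0) * du (b 0) + du (a 0) * re (b 0) + (re (a 1) * du (b 1) + du (a 1) * re (b 1))
       + (re (a 2) * du (b 2) + du (a 2) * re (b 2))"
  by (simp add: ddot_def)

lemma dr_expand: "re (ddot a b) = re (a 0) * re (b 0) + re (a 1) * re (b 1) + re (a 2) * re (b 2)"
  by (simp add: ddot_def)

lemma unit_facts:
  assumes z: "z \<notin> epsM smul"
  shows "sp (unit_part smul sp z) (unit_part smul sp z) = 1"
    "sp z y = dsqrt (sp z z) * sp (unit_part smul sp z) y"
    "re (dsqrt (sp z z)) > 0"
proof -
  note U = unit_part_eq[OF z]
  show "sp (unit_part smul sp z) (unit_part smul sp z) = 1" unfolding U(1) by (rule U(2))
  have "sp z y = sp (smul (dsqrt (sp z z)) (smul (nr z) z)) y" by (rule arg_cong[where f="\<lambda>v. sp v y"], rule U(3))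
  then show "sp z y = dsqrt (sp z z) * sp (unit_part smul sp z) y" unfolding U(1) by (simp only: sp_smulL)
  show "re (dsqrt (sp z z)) > 0" by (rule U(4))
qed

lemma unit_sp_zero:
  assumes z: "z \<notin> epsM smul" and h: "sp z y = 0"
  shows "sp (unit_part smul sp z) y = 0"
proof -
  let ?D = "dsqrt (sp z z)"
  have "?D * sp (unit_part smul sp z) y = 0" using unit_facts(2)[OF z, of y] h by simp
  then have "dinv ?D * (?D * sp (unit_part smul sp z) y) = 0" by simp
  moreover have "dinv ?D * ?D = 1" using dinv_mult[of ?D] unit_facts(3)[OF z] by (simp add: mult.commute)
  ultimately show ?thesis by (simp add: mult.assoc[symmetric])
qed

section \<open>(iii) implies (i)\<close>

lemma G_vals:
  assumes A: "A \<in> Espace smul sp"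
  shows "GP A 0 0 = 0" "GP A 1 1 = 0" "GP A 2 2 = 0"
    "GP A 1 0 = - GP A 0 1" "GP A 2 0 = - GP A 0 2" "GP A 2 1 = - GP A 1 2"
  using G_anti[OF A, of 0 0] G_anti[OF A, of 1 1] G_anti[OF A, of 2 2]
    G_anti[OF A, of 0 1] G_anti[OF A, of 0 2] G_anti[OF A, of 1 2] by simp_all

lemma perp_line_sp:
  assumes A: "A \<in> Espace smul sp" and B: "B \<in> Espace smul sp"
    and uB: "u \<in> B" and dE: "diffE smul sp OR B A (smul (dreal t) w)"
    and orth: "re (sp u w) = 0"
  shows "sp u (comb mm (\<lambda>k. Dual (re (co w k)) (\<Sum>j<3. re (co w j) * GP A j k))) = 0"
proof -
  define L where "L = comb mm (\<lambda>k. Dual (re (co w k)) (\<Sum>j<3. re (co w j) * GP A j k))"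
  define r where "r k = re (co w k)" for k
  define p where "p k = re (co u k)" for k
  define G where "G = GP A"
  obtain d where d1: "\<forall>k<3. re (co (smul (dreal t) w) k) = d k"
    and d2: "\<forall>i<3. \<forall>l<3. GP B i l = GP A i l + (\<Sum>k<3. levi i l k * d k)"
    using diffE_extract[OF A B dE] by blast
  have dk: "d k = t * r k" if "k < 3" for k using d1 that by (simp add: r_def)
  have qe: "du (co u l) = (\<Sum>i<3. p i * (G i l + (\<Sum>k<3. levi i l k * (t * r k))))" if l: "l < 3" for l
  proof -
    have "du (co u l) = (\<Sum>i<3. re (co u i) * GP B i l)" by (rule E_rep[OF B uB l])
    also have "\<dots> = (\<Sum>i<3. p i * (G i l + (\<Sum>k<3. levi i l k * (t * r k))))"
      using d2 l dk by (simp add: sum3 p_def G_def)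
    finally show ?thesis .
  qed
  note gv = G_vals[OF A, folded G_def]
  have q0: "du (co u 0) = p 1 * (- G 0 1 - t * r 2) + p 2 * (- G 0 2 + t * r 1)"
    using qe[of 0] gv by (simp add: sum3 levi_def algebra_simps)
  have q1: "du (co u 1) = p 0 * (G 0 1 + t * r 2) + p 2 * (- G 1 2 - t * r 0)"
    using qe[of 1] gv by (simp add: sum3 levi_def algebra_simps)
  have q2: "du (co u 2) = p 0 * (G 0 2 - t * r 1) + p 1 * (G 1 2 + t * r 0)"
    using qe[of 2] gv by (simp add: sum3 levi_def algebra_simps)
  have coL: "co L k = Dual (r k) (\<Sum>j<3. r j * G j k)" if "k < 3" for k
    using co_comb[OF that] by (simp add: L_def r_def G_def)
  have cL0: "co L 0 = Dual (r 0) (r 1 * (- G 0 1) + r 2 * (- G 0 2))" using coL[of 0] gv by (simp add: sum3)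
  have cL1: "co L 1 = Dual (r 1) (r 0 * G 0 1 + r 2 * (- G 1 2))" using coL[of 1] gv by (simp add: sum3)
  have cL2: "co L 2 = Dual (r 2) (r 0 * G 0 2 + r 1 * G 1 2)" using coL[of 2] gv by (simp add: sum3)
  have o: "p 0 * r 0 + p 1 * r 1 + p 2 * r 2 = 0"
  proof -
    have "re (sp u w) = re (ddot (co u) (co w))" by (rule arg_cong[where f=re], rule sp_coord)
    then show ?thesis using orth by (simp add: dr_expand p_def r_def)
  qed
  have "re (sp u L) = 0"
  proof -
    have "re (sp u L) = re (ddot (co u) (co L))" by (rule arg_cong[where f=re], rule sp_coord)
    also have "\<dots> = p 0 * r 0 + p 1 * r 1 + p 2 * r 2" unfolding dr_expand cL0 cL1 cL2 by (simp add: p_def)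
    finally show ?thesis using o by simp
  qed
  moreover have "du (sp u L) = 0"
  proof -
    have "du (sp u L) = du (ddot (co u) (co L))" by (rule arg_cong[where f=du], rule sp_coord)
    also have "\<dots> = p 0 * (r 1 * (- G 0 1) + r 2 * (- G 0 2)) + du (co u 0) * r 0
       + (p 1 * (r 0 * G 0 1 + r 2 * (- G 1 2)) + du (co u 1) * r 1)
       + (p 2 * (r 0 * G 0 2 + r 1 * G 1 2) + du (co u 2) * r 2)"
      unfolding dd_expand cL0 cL1 cL2 by (simp add: p_def)
    also have "\<dots> = 0" unfolding q0 q1 q2 by (simp add: algebra_simps)
    finally show ?thesis .
  qed
  ultimately show ?thesis unfolding L_def[symmetric] by (simp add: dual_eq_iff)
qed

lemma dir_iii_i:
  assumes z1: "z1 \<notin> epsM smul" and z2: "z2 \<notin> epsM smul" and z3: "z3 \<notin> epsM smul"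
    and H: "axes_meet_common_perp smul sp OR z1 z2 z3"
  shows "sp (cross smul sp OR z1 z2) z3 = 0"
proof -
  obtain A w where A: "A \<in> Espace smul sp" and w: "w \<notin> epsM smul"
    and H': "\<forall>z\<in>{z1, z2, z3}. Defs.axis smul sp z \<inter> lineE smul sp OR A w \<noteq> {} \<and>
           orthV sp (unit_part smul sp z) w"
    using H unfolding axes_meet_common_perp_def by blast
  define L where "L = comb mm (\<lambda>k. Dual (re (co w k)) (\<Sum>j<3. re (co w j) * GP A j k))"
  have zL: "sp z L = 0" if z: "z \<notin> epsM smul" and
    hz: "Defs.axis smul sp z \<inter> lineE smul sp OR A w \<noteq> {} \<and> orthV sp (unit_part smul sp z) w" for z
  proof -
    obtain B where B1: "B \<in> Defs.axis smul sp z" and B2: "B \<in> lineE smul sp OR A w" using hz by blast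
    have B: "B \<in> Espace smul sp" and uB: "unit_part smul sp z \<in> B" using B1 by (auto simp: Defs.axis_def)
    obtain t where dE: "diffE smul sp OR B A (smul (dreal t) w)" using B2 by (auto simp: lineE_def)
    have o: "re (sp (unit_part smul sp z) w) = 0" using hz by (simp add: orthV_def)
    have "sp (unit_part smul sp z) L = 0" unfolding L_def by (rule perp_line_sp[OF A B uB dE o])
    then show ?thesis using unit_facts(2)[OF z, of L] by simp
  qed
  have s1: "sp z1 L = 0" using zL[OF z1] H' by blast
  have s2: "sp z2 L = 0" using zL[OF z2] H' by blast
  have s3: "sp z3 L = 0" using zL[OF z3] H' by blast
  have coL: "re (co L k) = re (co w k)" if "k < 3" for k using co_comb[OF that] by (simp add: L_def)
  have nz: "\<not> (re (co L 0) = 0 \<and> re (co L 1) = 0 \<and> re (co L 2) = 0)"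
    using w coL[of 0] coL[of 1] coL[of 2] by (simp add: eps_coord)
  have "\<exists>k::nat. k < 3 \<and> re (co L k) \<noteq> 0"
  proof -
    { assume "re (co L 0) \<noteq> 0" hence ?thesis by (intro exI[of _ 0]) simp }
    moreover { assume "re (co L 1) \<noteq> 0" hence ?thesis by (intro exI[of _ 1]) simp }
    moreover { assume "re (co L 2) \<noteq> 0" hence ?thesis by (intro exI[of _ 2]) simp }
    ultimately show ?thesis using nz by blast
  qed
  then obtain k where k: "k < 3" and rk: "re (co L k) \<noteq> 0" by blast
  define T where "T = ddot (dcrs (co z1) (co z2)) (co z3)"
  have d1: "ddot (co z1) (co L) = 0" using s1 sp_coord by metis
  have d2: "ddot (co z2) (co L) = 0" using s2 sp_coord by metis
  have d3: "ddot (co z3) (co L) = 0" using s3 sp_coord by metis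
  have "T * co L k = 0" using triple_id[OF k, of "co z1" "co z2" "co z3" "co L"] d1 d2 d3 by (simp add: T_def)
  then have "T * (co L k * dinv (co L k)) = 0" by (simp add: mult.assoc[symmetric])
  then have "T = 0" using dinv_mult[OF rk] by simp
  then show ?thesis using triple_coord by (simp add: T_def)
qed

end

lemma rcrs_lin:
  assumes "R \<noteq> 0"
  shows "rcrs (\<lambda>k. x k / R + t * y k) p l = rcrs x p l / R + t * rcrs y p l"
  using assms by (simp add: rcrs_def field_simps)

context dset
begin

lemma dir_i_iii:
  assumes z1: "z1 \<notin> epsM smul" and z2: "z2 \<notin> epsM smul" and z3: "z3 \<notin> epsM smul"
    and i12: "dindep2 smul z1 z2" and T: "sp (cross smul sp OR z1 z2) z3 = 0"
  shows "axes_meet_common_perp smul sp OR z1 z2 z3"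
proof -
  define n where "n = cross smul sp OR z1 z2"
  have cn: "co n k = dcrs (co z1) (co z2) k" if "k < 3" for k using cross_coord[OF that] by (simp add: n_def)
  define r where "r k = re (co n k)" for k
  define s where "s k = du (co n k)" for k
  have rne: "\<not> (r 0 = 0 \<and> r 1 = 0 \<and> r 2 = 0)"
    using realcross_ne[OF i12 z1] cn[of 0] cn[of 1] cn[of 2] by (simp add: r_def dcrs_def)
  have nE: "n \<notin> epsM smul" using rne by (simp add: eps_coord r_def)
  define R2 where "R2 = rdot r r"
  have R2: "R2 > 0" using sq3_pos[OF rne] by (simp add: R2_def rdot_def)
  have dn: "ddot e (co n) = ddot e (dcrs (co z1) (co z2))" for e by (simp add: ddot_def cn)
  have n1: "sp z1 n = 0"
  proof -
    have "sp z1 n = ddot (co z1) (co n)" by (rule sp_coord)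
    also have "\<dots> = 0" unfolding dn by (simp add: ddot_def dcrs_def algebra_simps)
    finally show ?thesis .
  qed
  have n2: "sp z2 n = 0"
  proof -
    have "sp z2 n = ddot (co z2) (co n)" by (rule sp_coord)
    also have "\<dots> = 0" unfolding dn by (simp add: ddot_def dcrs_def algebra_simps)
    finally show ?thesis .
  qed
  have n3: "sp z3 n = 0" using T sp_sym[of z3 n] by (simp add: n_def)
  define a where "a k = rcrs r s k / R2" for k
  have main: "Defs.axis smul sp z \<inter> lineE smul sp OR (Pt a) n \<noteq> {} \<and> orthV sp (unit_part smul sp z) n"
    if z: "z \<notin> epsM smul" and zn: "sp z n = 0" for z
  proof -
    define u where "u = unit_part smul sp z"
    have uu: "sp u u = 1" using unit_facts(1)[OF z] by (simp add: u_def)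
    have un: "sp u n = 0" using unit_sp_zero[OF z zn] by (simp add: u_def)
    define p where "p k = re (co u k)" for k
    define q where "q k = du (co u k)" for k
    have uu': "ddot (co u) (co u) = 1" using uu sp_coord by metis
    have un': "ddot (co u) (co n) = 0" using un sp_coord by metis
    have pp: "rdot p p = 1" using arg_cong[OF uu', of re] unfolding dr_expand by (simp add: rdot_def p_def)
    have qp: "rdot q p = 0" using arg_cong[OF uu', of du] unfolding dd_expand by (simp add: rdot_def p_def q_def algebra_simps)
    have rp: "rdot r p = 0" using arg_cong[OF un', of re] unfolding dr_expand by (simp add: rdot_def p_def r_def algebra_simps)
    have sp': "rdot s p = - rdot q r" using arg_cong[OF un', of du] unfolding dd_expand
      by (simp add: rdot_def p_def q_def r_def s_def algebra_simps)
    define tt where "tt = rdot (rcrs p q) r / R2"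
    define c where "c k = a k + tt * r k" for k
    have qc: "q l = rcrs c p l" if l: "l < 3" for l
    proof -
      have k: "R2 * q l = rcrs (rcrs r s) p l + rdot (rcrs p q) r * rcrs r p l"
        using key_real[OF l pp qp rp sp'] by (simp add: R2_def)
      have "rcrs c p l = rcrs (rcrs r s) p l / R2 + tt * rcrs r p l"
        unfolding c_def a_def by (rule rcrs_lin) (use R2 in simp)
      also have "\<dots> = (R2 * q l) / R2" unfolding k tt_def using R2 by (simp add: field_simps)
      also have "\<dots> = q l" using R2 by simp
      finally show ?thesis by simp
    qed
    define B where "B = Pt c"
    have BE: "B \<in> Espace smul sp" unfolding B_def by (rule Pt_E)
    have uB: "u \<in> B"
      unfolding B_def Pt_def
    proof (intro CollectI allI impI)
      fix l :: nat assume l: "l < 3"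
      show "du (co u l) = (\<Sum>i<3. re (co u i) * Gv c i l)"
        using qc[OF l] less3[OF l] unfolding q_def p_def
        by (auto simp: sum3 Gv_vals Gv_vals' rcrs_def algebra_simps)
    qed
    have dE: "diffE smul sp OR B (Pt a) (smul (dreal tt) n)"
      unfolding diffE_def mm_def[symmetric] Let_def
    proof (rule exI[of _ "\<lambda>k. tt * r k"], intro conjI allI impI)
      show "smul (dreal tt) n - (\<Sum>k<3. smul (dreal (tt * r k)) (mm k)) \<in> epsM smul"
        unfolding eps_coord by (simp add: co_sum sum3 co_mm r_def)
    next
      fix i :: nat assume i: "i < 3"
      have lA: "lift smul (Pt a) (mm 0) = hh a 0" "lift smul (Pt a) (mm 1) = hh a 1"
        "lift smul (Pt a) (mm 2) = hh a 2" by (simp_all add: lift_Pt)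
      show "lift smul B (mm i) = lift smul (Pt a) (mm i) +
         smul eps (\<Sum>j<3. \<Sum>k<3. smul (dreal (levi i j k * (tt * r k))) (lift smul (Pt a) (mm j)))"
        unfolding B_def lift_Pt[OF i] sum3 lA
      proof (rule eq_coord)
        fix l :: nat assume l: "l < 3"
        show "co (hh c i) l = co (hh a i + smul eps
           (smul (dreal (levi i 0 0 * (tt * r 0))) (hh a 0) + smul (dreal (levi i 0 1 * (tt * r 1))) (hh a 0) +
            smul (dreal (levi i 0 2 * (tt * r 2))) (hh a 0) +
            (smul (dreal (levi i 1 0 * (tt * r 0))) (hh a 1) + smul (dreal (levi i 1 1 * (tt * r 1))) (hh a 1) +
             smul (dreal (levi i 1 2 * (tt * r 2))) (hh a 1)) +
            (smul (dreal (levi i 2 0 * (tt * r 0))) (hh a 2) + smul (dreal (levi i 2 1 * (tt * r 1))) (hh a 2) +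
             smul (dreal (levi i 2 2 * (tt * r 2))) (hh a 2)))) l"
          using less3[OF i] less3[OF l]
          by (auto simp: co_hh[OF l] dual_eq_iff Gv_def sum3 levi_def c_def algebra_simps)
      qed
    qed
    have "B \<in> Defs.axis smul sp z" using BE uB by (simp add: Defs.axis_def u_def)
    moreover have "B \<in> lineE smul sp OR (Pt a) n" using BE dE by (auto simp: lineE_def)
    moreover have "orthV sp (unit_part smul sp z) n" using un by (simp add: orthV_def u_def)
    ultimately show ?thesis by blast
  qed
  show ?thesis unfolding axes_meet_common_perp_def
    using Pt_E[of a] nE main[OF z1 n1] main[OF z2 n2] main[OF z3 n3] by blast
qed

end

theorem proposition15:
  fixes smul :: "dual \<Rightarrow> 'm::ab_group_add \<Rightarrow> 'm"
    and sp :: "'m \<Rightarrow> 'm \<Rightarrow> dual"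
    and OR :: "(nat \<Rightarrow> 'm) set"
    and z1 z2 z3 :: 'm
  assumes "module smul"
    and "free_rank3 smul"
    and "Defs.scalar_product smul sp"
    and "orientation smul OR"
    and "z1 \<notin> epsM smul" and "z2 \<notin> epsM smul" and "z3 \<notin> epsM smul"
    and "dindep2 smul z1 z2" and "dindep2 smul z1 z3" and "dindep2 smul z2 z3"
  shows "(sp (cross smul sp OR z1 z2) z3 = 0
            \<longleftrightarrow> dcomb smul z1 z2 z3 \<or> dcomb smul z2 z1 z3 \<or> dcomb smul z3 z1 z2)
       \<and> ((dcomb smul z1 z2 z3 \<or> dcomb smul z2 z1 z3 \<or> dcomb smul z3 z1 z2)
            \<longleftrightarrow> axes_meet_common_perp smul sp OR z1 z2 z3)
       \<and> (sp (cross smul sp OR z1 z2) z3 = 0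
            \<longrightarrow> dcomb smul z1 z2 z3 \<and> dcomb smul z2 z1 z3 \<and> dcomb smul z3 z1 z2)"
proof -
  interpret dset smul sp OR
    using assms(1,3,4) by (simp add: dset_def dset_axioms_def)
  have A: "(sp (cross smul sp OR z1 z2) z3 = 0
            \<longleftrightarrow> dcomb smul z1 z2 z3 \<or> dcomb smul z2 z1 z3 \<or> dcomb smul z3 z1 z2)
       \<and> (sp (cross smul sp OR z1 z2) z3 = 0
            \<longrightarrow> dcomb smul z1 z2 z3 \<and> dcomb smul z2 z1 z3 \<and> dcomb smul z3 z1 z2)"
    by (rule part_i_ii) (use assms in auto)
  have B1: "axes_meet_common_perp smul sp OR z1 z2 z3" if "sp (cross smul sp OR z1 z2) z3 = 0"
    using dir_i_iii[OF assms(5,6,7,8) that] .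
  have B2: "sp (cross smul sp OR z1 z2) z3 = 0" if "axes_meet_common_perp smul sp OR z1 z2 z3"
    using dir_iii_i[OF assms(5,6,7) that] .
  show ?thesis using A B1 B2 by blast
qed

end
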